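(* (i) Let $(b_{ij})_{1\le i,j\le 3}$ be the canonical generators of $C(B_3^+)$. Then the linear span of $\{b_{mn}b_{st}: m,n,s,t\in\{1,2,3\}\}$ (the entries of $u_{B_3^+}^{\otimes2}=\sum_{m,n,s,t}b_{mn}b_{st}\otimes E_{mn}\otimes E_{st}$) has dimension $14$. (ii) Let $(o_{ij})_{1\le i,j\le 2}$ be the canonical generators of $C(O_2^+)$. Then the linear span of $\{o_{mn}o_{st}: m,n,s,t\in\{1,2\}\}$ (the entries of $u_{O_2^+}^{\otimes2}$) has dimension $10$.
   Context: $C(O_N^+)$ (free orthogonal quantum group) is the universal unital $C^*$-algebra generated by self-adjoint elements $o_{ij}$, $1\le i,j\le N$, such that the matrix $(o_{ij})$ is orthogonal, i.e. $\sum_k o_{ik}o_{jk}=\sum_k o_{ki}o_{kj}=\delta_{ij}\mathbb 1$. $C(B_N^+)$ (free bistochastic quantum group) is the universal unital $C^*$-algebra generated by self-adjoint $b_{ij}$, $1\le i,j\le N$, such that $(b_{ij})$ is orthogonal and every row and every column sums to $\mathbb 1$: $\sum_k b_{ik}=\sum_k b_{ki}=\mathbb 1$ for all $i$. (Equivalently these are the easy quantum groups of all non-crossing partitions with blocks of size $2$, resp. of size $1$ or $2$.) $E_{mn}$ denote matrix units. *)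

theory Defs
  imports Complex_Main "HOL-Library.Poly_Mapping" "HOL-Library.Numeral_Type"
begin

datatype 'g word = Word "'g list"

instantiation word :: (type) monoid_add
begin
definition zero_word :: "'g word" where "zero_word = Word []"
fun plus_word :: "'g word \<Rightarrow> 'g word \<Rightarrow> 'g word" where
  "plus_word (Word u) (Word v) = Word (u @ v)"
instance
proof
  fix a b c :: "'g word"
  show "a + b + c = a + (b + c)" by (cases a; cases b; cases c) simp
  show "0 + a = a" by (cases a) (simp add: zero_word_def)
  show "a + 0 = a" by (cases a) (simp add: zero_word_def)
qed
end

text \<open>The free algebra \<open>\<complex>\<langle>g\<rangle>\<close>: finitely supported complex functions on words,
  with convolution product (a unital ring, by the Poly_Mapping library).\<close>
type_synonym 'g fpoly = "'g word \<Rightarrow>\<^sub>0 complex"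

definition fscale :: "complex \<Rightarrow> 'g fpoly \<Rightarrow> 'g fpoly" where
  "fscale c p = Poly_Mapping.single 0 c * p"

definition gen :: "'g \<Rightarrow> 'g fpoly" where
  "gen g = Poly_Mapping.single (Word [g]) 1"

inductive_set ideal_gen :: "'g fpoly set \<Rightarrow> 'g fpoly set" for R where
  base: "r \<in> R \<Longrightarrow> r \<in> ideal_gen R"
| zero: "0 \<in> ideal_gen R"
| add: "p \<in> ideal_gen R \<Longrightarrow> q \<in> ideal_gen R \<Longrightarrow> p + q \<in> ideal_gen R"
| mult: "p \<in> ideal_gen R \<Longrightarrow> a * p * b \<in> ideal_gen R"

lemma ideal_gen_scale: "p \<in> ideal_gen R \<Longrightarrow> fscale c p \<in> ideal_gen R"
  using ideal_gen.mult[of p R "Poly_Mapping.single 0 c" 1] by (simp add: fscale_def)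

lemma ideal_gen_uminus: "p \<in> ideal_gen R \<Longrightarrow> - p \<in> ideal_gen R"
  using ideal_gen.mult[of p R "- 1" 1] by simp

lemma ideal_gen_diff: "p \<in> ideal_gen R \<Longrightarrow> q \<in> ideal_gen R \<Longrightarrow> p - q \<in> ideal_gen R"
  using ideal_gen.add[OF _ ideal_gen_uminus, of p R q] by simp

lemma ideal_gen_left: "p \<in> ideal_gen R \<Longrightarrow> a * p \<in> ideal_gen R"
  using ideal_gen.mult[of p R a 1] by simp

lemma ideal_gen_right: "p \<in> ideal_gen R \<Longrightarrow> p * b \<in> ideal_gen R"
  using ideal_gen.mult[of p R 1 b] by simp

text \<open>Generators are indexed by pairs \<open>(i,j)\<close> of elements of an index type \<open>'n\<close>, meant to be finite
  with \<open>N = CARD('n)\<close> elements.\<close>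
definition O_rels :: "('n \<times> 'n) fpoly set" where
  "O_rels =
     {(\<Sum>k\<in>UNIV. gen (i,k) * gen (j,k)) - (if i = j then 1 else 0) | i j. True} \<union>
     {(\<Sum>k\<in>UNIV. gen (k,i) * gen (k,j)) - (if i = j then 1 else 0) | i j. True}"

definition B_rels :: "('n \<times> 'n) fpoly set" where
  "B_rels = O_rels \<union>
     {(\<Sum>k\<in>UNIV. gen (i,k)) - 1 | i. True} \<union>
     {(\<Sum>k\<in>UNIV. gen (k,i)) - 1 | i. True}"

definition O_equiv :: "('n \<times> 'n) fpoly \<Rightarrow> ('n \<times> 'n) fpoly \<Rightarrow> bool" where
  "O_equiv p q \<longleftrightarrow> p - q \<in> ideal_gen O_rels"

definition B_equiv :: "('n \<times> 'n) fpoly \<Rightarrow> ('n \<times> 'n) fpoly \<Rightarrow> bool" where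
  "B_equiv p q \<longleftrightarrow> p - q \<in> ideal_gen B_rels"

lemma equivp_ideal_rel:
  fixes R :: "'g fpoly set"
  shows "equivp (\<lambda>p q. p - q \<in> ideal_gen R)"
proof (rule equivpI)
  show "reflp (\<lambda>p q. p - q \<in> ideal_gen R)" by (rule reflpI) (simp add: ideal_gen.zero)
  show "symp (\<lambda>p q. p - q \<in> ideal_gen R)"
  proof (rule sympI)
    fix x y :: "'g fpoly"
    assume "x - y \<in> ideal_gen R"
    hence "- (x - y) \<in> ideal_gen R" by (rule ideal_gen_uminus)
    thus "y - x \<in> ideal_gen R" by simp
  qed
  show "transp (\<lambda>p q. p - q \<in> ideal_gen R)"
  proof (rule transpI)
    fix x y z :: "'g fpoly"
    assume "x - y \<in> ideal_gen R" "y - z \<in> ideal_gen R"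
    hence "(x - y) + (y - z) \<in> ideal_gen R" by (rule ideal_gen.add)
    thus "x - z \<in> ideal_gen R" by simp
  qed
qed

quotient_type ('n) pol_O = "('n \<times> 'n) fpoly" / O_equiv
  unfolding O_equiv_def[abs_def] by (rule equivp_ideal_rel)

quotient_type ('n) pol_B = "('n \<times> 'n) fpoly" / B_equiv
  unfolding B_equiv_def[abs_def] by (rule equivp_ideal_rel)

lemma ideal_rel_mult:
  assumes "p - p' \<in> ideal_gen R" "q - q' \<in> ideal_gen R"
  shows "p * q - p' * q' \<in> ideal_gen R"
proof -
  have eq: "p * q - p' * q' = (p - p') * q + p' * (q - q')" by (simp add: algebra_simps)
  show ?thesis unfolding eq
    by (rule ideal_gen.add[OF ideal_gen_right[OF assms(1)] ideal_gen_left[OF assms(2)]])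
qed

lemma ideal_rel_add:
  assumes "p - p' \<in> ideal_gen R" "q - q' \<in> ideal_gen R"
  shows "(p + q) - (p' + q') \<in> ideal_gen R"
proof -
  have eq: "(p + q) - (p' + q') = (p - p') + (q - q')" by (simp add: algebra_simps)
  show ?thesis unfolding eq by (rule ideal_gen.add[OF assms])
qed

lemma ideal_rel_minus:
  assumes "p - p' \<in> ideal_gen R" "q - q' \<in> ideal_gen R"
  shows "(p - q) - (p' - q') \<in> ideal_gen R"
proof -
  have eq: "(p - q) - (p' - q') = (p - p') - (q - q')" by (simp add: algebra_simps)
  show ?thesis unfolding eq by (rule ideal_gen_diff[OF assms])
qed

lemma ideal_rel_uminus:
  assumes "p - p' \<in> ideal_gen R" shows "(- p) - (- p') \<in> ideal_gen R"
  using ideal_gen_uminus[OF assms] by (simp add: algebra_simps)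

lemma ideal_rel_scale:
  assumes "p - p' \<in> ideal_gen R" shows "fscale c p - fscale c p' \<in> ideal_gen R"
  using ideal_gen_left[OF assms, of "Poly_Mapping.single 0 c"]
  by (simp add: fscale_def algebra_simps)

lemma ideal_rel_refl: "p - p \<in> ideal_gen R" by (simp add: ideal_gen.zero)

lemma O_equiv_eqI: "p = q \<Longrightarrow> O_equiv p q"
  by (simp add: O_equiv_def ideal_gen.zero)

instantiation pol_O :: (type) "{ring, monoid_mult}"
begin
lift_definition zero_pol_O :: "'n pol_O" is 0 .
lift_definition one_pol_O :: "'n pol_O" is 1 .
lift_definition plus_pol_O :: "'n pol_O \<Rightarrow> 'n pol_O \<Rightarrow> 'n pol_O" is "(+)"
  unfolding O_equiv_def by (rule ideal_rel_add)
lift_definition minus_pol_O :: "'n pol_O \<Rightarrow> 'n pol_O \<Rightarrow> 'n pol_O" is "(-)"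
  unfolding O_equiv_def by (rule ideal_rel_minus)
lift_definition uminus_pol_O :: "'n pol_O \<Rightarrow> 'n pol_O" is uminus
  unfolding O_equiv_def by (rule ideal_rel_uminus)
lift_definition times_pol_O :: "'n pol_O \<Rightarrow> 'n pol_O \<Rightarrow> 'n pol_O" is "(*)"
  unfolding O_equiv_def by (rule ideal_rel_mult)
instance
  by standard (transfer, rule O_equiv_eqI, simp add: algebra_simps)+
end

lemma B_equiv_eqI: "p = q \<Longrightarrow> B_equiv p q"
  by (simp add: B_equiv_def ideal_gen.zero)

instantiation pol_B :: (type) "{ring, monoid_mult}"
begin
lift_definition zero_pol_B :: "'n pol_B" is 0 .
lift_definition one_pol_B :: "'n pol_B" is 1 .
lift_definition plus_pol_B :: "'n pol_B \<Rightarrow> 'n pol_B \<Rightarrow> 'n pol_B" is "(+)"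
  unfolding B_equiv_def by (rule ideal_rel_add)
lift_definition minus_pol_B :: "'n pol_B \<Rightarrow> 'n pol_B \<Rightarrow> 'n pol_B" is "(-)"
  unfolding B_equiv_def by (rule ideal_rel_minus)
lift_definition uminus_pol_B :: "'n pol_B \<Rightarrow> 'n pol_B" is uminus
  unfolding B_equiv_def by (rule ideal_rel_uminus)
lift_definition times_pol_B :: "'n pol_B \<Rightarrow> 'n pol_B \<Rightarrow> 'n pol_B" is "(*)"
  unfolding B_equiv_def by (rule ideal_rel_mult)
instance
  by standard (transfer, rule B_equiv_eqI, simp add: algebra_simps)+
end

lift_definition scale_O :: "complex \<Rightarrow> 'n pol_O \<Rightarrow> 'n pol_O" is fscale
  unfolding O_equiv_def by (rule ideal_rel_scale)

lift_definition scale_B :: "complex \<Rightarrow> 'n pol_B \<Rightarrow> 'n pol_B" is fscale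
  unfolding B_equiv_def by (rule ideal_rel_scale)


lemma fscale_vector_space: "Vector_Spaces.vector_space (fscale :: complex \<Rightarrow> 'g fpoly \<Rightarrow> 'g fpoly)"
  by unfold_locales
    (simp_all add: fscale_def distrib_left distrib_right single_add mult_single
       mult.assoc[symmetric] flip: one_poly_mapping.abs_eq)

lemma scale_O_vector_space: "Vector_Spaces.vector_space (scale_O :: complex \<Rightarrow> 'n pol_O \<Rightarrow> 'n pol_O)"
  by unfold_locales (transfer, rule O_equiv_eqI,
      simp add: fscale_def distrib_left distrib_right single_add mult_single
       mult.assoc[symmetric] flip: one_poly_mapping.abs_eq)+

lemma scale_B_vector_space: "Vector_Spaces.vector_space (scale_B :: complex \<Rightarrow> 'n pol_B \<Rightarrow> 'n pol_B)"
  by unfold_locales (transfer, rule B_equiv_eqI,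
      simp add: fscale_def distrib_left distrib_right single_add mult_single
       mult.assoc[symmetric] flip: one_poly_mapping.abs_eq)+

lift_definition o_gen :: "'n \<Rightarrow> 'n \<Rightarrow> 'n pol_O" is "\<lambda>i j. gen (i,j)" .
lift_definition b_gen :: "'n \<Rightarrow> 'n \<Rightarrow> 'n pol_B" is "\<lambda>i j. gen (i,j)" .

end

theory Submission
  imports Defs
begin

datatype m2 = M2 complex complex complex complex

instantiation m2 :: ring_1
begin
definition "zero_m2 = M2 0 0 0 0"
definition "one_m2 = M2 1 0 0 1"
fun plus_m2 where "plus_m2 (M2 a b c d) (M2 e f g h) = M2 (a+e) (b+f) (c+g) (d+h)"
fun minus_m2 where "minus_m2 (M2 a b c d) (M2 e f g h) = M2 (a-e) (b-f) (c-g) (d-h)"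
fun uminus_m2 where "uminus_m2 (M2 a b c d) = M2 (-a) (-b) (-c) (-d)"
fun times_m2 where "times_m2 (M2 a b c d) (M2 e f g h) = M2 (a*e+b*g) (a*f+b*h) (c*e+d*g) (c*f+d*h)"
instance
proof
  fix x y z :: m2
  show "x + y + z = x + (y + z)" by (cases x; cases y; cases z) (simp add: algebra_simps)
  show "x + y = y + x" by (cases x; cases y) (simp add: algebra_simps)
  show "0 + x = x" by (cases x) (simp add: zero_m2_def)
  show "- x + x = 0" by (cases x) (simp add: zero_m2_def)
  show "x - y = x + - y" by (cases x; cases y) simp
  show "x * y * z = x * (y * z)" by (cases x; cases y; cases z) (simp add: algebra_simps)
  show "1 * x = x" by (cases x) (simp add: one_m2_def)
  show "x * 1 = x" by (cases x) (simp add: one_m2_def)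
  show "(x + y) * z = x * z + y * z" by (cases x; cases y; cases z) (simp add: algebra_simps)
  show "x * (y + z) = x * y + x * z" by (cases x; cases y; cases z) (simp add: algebra_simps)
  show "(0::m2) \<noteq> 1" by (simp add: zero_m2_def one_m2_def)
qed
end

definition sc :: "complex \<Rightarrow> m2" where "sc c = M2 c 0 0 c"

lemma sc_add: "sc (a + b) = sc a + sc b" by (simp add: sc_def)
lemma sc_mult: "sc (a * b) = sc a * sc b" by (simp add: sc_def)
lemma sc_0[simp]: "sc 0 = 0" by (simp add: sc_def zero_m2_def)
lemma sc_1[simp]: "sc 1 = 1" by (simp add: sc_def one_m2_def)
lemma sc_comm: "sc a * x = x * sc a" by (cases x) (simp add: sc_def algebra_simps)

lemma sc_rearr: "sc a * (sc b * (x * y)) = (sc a * x) * (sc b * y)"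
  by (metis mult.assoc sc_comm)

fun wv :: "('g \<Rightarrow> m2) \<Rightarrow> 'g word \<Rightarrow> m2" where
  "wv g (Word l) = prod_list (map g l)"

lemma wv_plus: "wv g (u + v) = wv g u * wv g v"
  by (cases u; cases v) simp

lemma wv_zero[simp]: "wv g 0 = 1"
  by (simp add: zero_word_def)

definition phi :: "('g \<Rightarrow> m2) \<Rightarrow> 'g fpoly \<Rightarrow> m2" where
  "phi g p = (\<Sum>w\<in>Poly_Mapping.keys p. sc (Poly_Mapping.lookup p w) * wv g w)"

lemma phi_support:
  assumes "finite A" "Poly_Mapping.keys p \<subseteq> A"
  shows "phi g p = (\<Sum>w\<in>A. sc (Poly_Mapping.lookup p w) * wv g w)"
  unfolding phi_def
  by (rule sum.mono_neutral_left[OF assms(1) assms(2)]) (auto simp: in_keys_iff)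

lemma phi_add: "phi g (p + q) = phi g p + phi g q"
proof -
  let ?A = "Poly_Mapping.keys p \<union> Poly_Mapping.keys q"
  have f: "finite ?A" by simp
  have "phi g (p + q) = (\<Sum>w\<in>?A. sc (Poly_Mapping.lookup (p+q) w) * wv g w)"
    by (rule phi_support[OF f]) (simp add: keys_add)
  also have "\<dots> = (\<Sum>w\<in>?A. sc (Poly_Mapping.lookup p w) * wv g w) + (\<Sum>w\<in>?A. sc (Poly_Mapping.lookup q w) * wv g w)"
    by (simp add: lookup_add sc_add distrib_right sum.distrib)
  also have "\<dots> = phi g p + phi g q"
    by (simp add: phi_support[OF f])
  finally show ?thesis .
qed

lemma phi_zero[simp]: "phi g 0 = 0" by (simp add: phi_def)

lemma phi_uminus: "phi g (- p) = - phi g p"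
  using phi_add[of g p "-p"] by (simp add: eq_neg_iff_add_eq_0 add.commute)

lemma phi_diff: "phi g (p - q) = phi g p - phi g q"
  using phi_add[of g p "-q"] phi_uminus[of g q] by simp

lemma phi_sum: "phi g (\<Sum>i\<in>I. f i) = (\<Sum>i\<in>I. phi g (f i))"
  by (induction I rule: infinite_finite_induct) (simp_all add: phi_add)

lemma phi_single: "phi g (Poly_Mapping.single w c) = sc c * wv g w"
  by (cases "c = 0") (simp_all add: phi_def)

lemma poly_expand: "p = (\<Sum>w\<in>Poly_Mapping.keys p. Poly_Mapping.single w (Poly_Mapping.lookup p w))"
  by (rule poly_mapping_eqI) (simp add: lookup_sum lookup_single when_def in_keys_iff
       sum.delta' [unfolded when_def] cong: if_cong)

lemma phi_mult: "phi g (p * q) = phi g p * phi g q"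
proof -
  let ?P = "Poly_Mapping.keys p" and ?Q = "Poly_Mapping.keys q"
  have "p * q = (\<Sum>w\<in>?P. Poly_Mapping.single w (Poly_Mapping.lookup p w)) *
                (\<Sum>v\<in>?Q. Poly_Mapping.single v (Poly_Mapping.lookup q v))"
    by (subst poly_expand[of p], subst poly_expand[of q]) (rule refl)
  also have "\<dots> = (\<Sum>w\<in>?P. \<Sum>v\<in>?Q. Poly_Mapping.single (w + v) (Poly_Mapping.lookup p w * Poly_Mapping.lookup q v))"
    by (simp add: sum_distrib_left sum_distrib_right mult_single sum.swap[of _ ?Q])
  finally have "phi g (p * q) = (\<Sum>w\<in>?P. \<Sum>v\<in>?Q. (sc (Poly_Mapping.lookup p w) * wv g w) * (sc (Poly_Mapping.lookup q v) * wv g v))"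
    by (simp add: phi_sum phi_single wv_plus sc_mult mult.assoc sc_rearr)
  also have "\<dots> = phi g p * phi g q"
    by (simp add: phi_def sum_product)
  finally show ?thesis .
qed

lemma phi_one[simp]: "phi g 1 = 1"
  by (metis phi_single sc_1 single_one wv_zero mult_1_left)

lemma phi_gen[simp]: "phi g (gen x) = g x"
  by (simp add: gen_def phi_single)

lemma phi_fscale: "phi g (fscale c p) = sc c * phi g p"
  by (simp add: fscale_def phi_mult phi_single)

lemma ideal_kill:
  assumes "\<forall>r\<in>R. phi g r = 0" "p \<in> ideal_gen R"
  shows "phi g p = 0"
  using assms(2) by induction (use assms(1) in \<open>simp_all add: phi_add phi_mult\<close>)

definition goodO :: "('n \<times> 'n \<Rightarrow> m2) \<Rightarrow> bool" where
  "goodO g \<longleftrightarrow> (\<forall>r\<in>O_rels. phi g r = 0)"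
definition goodB :: "('n \<times> 'n \<Rightarrow> m2) \<Rightarrow> bool" where
  "goodB g \<longleftrightarrow> (\<forall>r\<in>B_rels. phi g r = 0)"

lemma O_abs_sum: "(\<Sum>i\<in>I. scale_O (c i) (abs_pol_O (P i))) = abs_pol_O (\<Sum>i\<in>I. fscale (c i) (P i))"
  by (induction I rule: infinite_finite_induct)
     (simp_all add: zero_pol_O.abs_eq plus_pol_O.abs_eq scale_O.abs_eq)

lemma B_abs_sum: "(\<Sum>i\<in>I. scale_B (c i) (abs_pol_B (P i))) = abs_pol_B (\<Sum>i\<in>I. fscale (c i) (P i))"
  by (induction I rule: infinite_finite_induct)
     (simp_all add: zero_pol_B.abs_eq plus_pol_B.abs_eq scale_B.abs_eq)

lemma O_phi_zero:
  assumes "abs_pol_O p = 0" "goodO g" shows "phi g p = 0"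
proof -
  have "abs_pol_O p = abs_pol_O 0" using assms(1) by (simp add: zero_pol_O.abs_eq)
  hence "O_equiv p 0" by (simp add: pol_O.abs_eq_iff)
  hence "p \<in> ideal_gen O_rels" by (simp add: O_equiv_def)
  thus ?thesis using assms(2) ideal_kill unfolding goodO_def by blast
qed

lemma B_phi_zero:
  assumes "abs_pol_B p = 0" "goodB g" shows "phi g p = 0"
proof -
  have "abs_pol_B p = abs_pol_B 0" using assms(1) by (simp add: zero_pol_B.abs_eq)
  hence "B_equiv p 0" by (simp add: pol_B.abs_eq_iff)
  hence "p \<in> ideal_gen B_rels" by (simp add: B_equiv_def)
  thus ?thesis using assms(2) ideal_kill unfolding goodB_def by blast
qed

lemma O_lin:
  assumes "(\<Sum>i\<in>I. scale_O (c i) (abs_pol_O (P i))) = 0" "goodO g"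
  shows "(\<Sum>i\<in>I. sc (c i) * phi g (P i)) = 0"
  using O_phi_zero[OF assms(1)[unfolded O_abs_sum] assms(2)] by (simp add: phi_sum phi_fscale)

lemma B_lin:
  assumes "(\<Sum>i\<in>I. scale_B (c i) (abs_pol_B (P i))) = 0" "goodB g"
  shows "(\<Sum>i\<in>I. sc (c i) * phi g (P i)) = 0"
  using B_phi_zero[OF assms(1)[unfolded B_abs_sum] assms(2)] by (simp add: phi_sum phi_fscale)

lemma exhaust2: fixes x :: 2 shows "x = 0 \<or> x = 1"
proof (induct x)
  case (of_int z)
  then have "z = 0 \<or> z = 1" by fastforce
  then show ?case by auto
qed

lemma exhaust3: fixes x :: 3 shows "x = 0 \<or> x = 1 \<or> x = 2"
proof (induct x)
  case (of_int z)
  then have "z = 0 \<or> z = 1 \<or> z = 2" by fastforce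
  then show ?case by auto
qed

lemma forall2: "(\<forall>i::2. P i) \<longleftrightarrow> P 0 \<and> P 1" by (metis exhaust2)
lemma forall3: "(\<forall>i::3. P i) \<longleftrightarrow> P 0 \<and> P 1 \<and> P 2" by (metis exhaust3)
lemma UNIV2: "(UNIV :: 2 set) = {0, 1}" using exhaust2 by auto
lemma UNIV3: "(UNIV :: 3 set) = {0, 1, 2}" using exhaust3 by auto
lemma sum2: "sum f (UNIV :: 2 set) = f 0 + f 1" unfolding UNIV2 by simp
lemma sum3: "sum f (UNIV :: 3 set) = f 0 + f 1 + f 2" unfolding UNIV3 by (simp add: ac_simps)

lemma phi_ifone: "phi g (if b then 1 else 0) = (if b then 1 else 0)" by simp

lemma phi_if: "phi g (if b then 1 else 0) = (if b then 1 else 0)" by simp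

lemma ball_img2: "(\<forall>r\<in>{f i j | i j. True}. P r) \<longleftrightarrow> (\<forall>i j. P (f i j))" by blast
lemma ball_img1: "(\<forall>r\<in>{f i | i. True}. P r) \<longleftrightarrow> (\<forall>i. P (f i))" by blast

lemma goodO_iff: "goodO g \<longleftrightarrow> (\<forall>i j. (\<Sum>k\<in>UNIV. g (i,k) * g (j,k)) = (if i = j then 1 else 0) \<and>
    (\<Sum>k\<in>UNIV. g (k,i) * g (k,j)) = (if i = j then 1 else 0))"
  unfolding goodO_def O_rels_def ball_Un ball_img2
  by (simp add: phi_diff phi_sum phi_mult phi_if right_minus_eq all_conj_distrib del: phi_one)

lemma goodB_iff: "goodB g \<longleftrightarrow> (\<forall>i j. (\<Sum>k\<in>UNIV. g (i,k) * g (j,k)) = (if i = j then 1 else 0) \<and>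
    (\<Sum>k\<in>UNIV. g (k,i) * g (k,j)) = (if i = j then 1 else 0)) \<and>
    (\<forall>i. (\<Sum>k\<in>UNIV. g (i,k)) = 1 \<and> (\<Sum>k\<in>UNIV. g (k,i)) = 1)"
  unfolding goodB_def B_rels_def O_rels_def ball_Un ball_img2 ball_img1
  by (simp add: phi_diff phi_sum phi_mult phi_if right_minus_eq all_conj_distrib del: phi_one) simp

definition "mX = M2 0 1 1 0"
definition "mZ = M2 1 0 0 (-1)"
definition "mU = M2 1 1 0 (-1)"
definition "mL = M2 1 0 1 (-1)"
definition v2 :: "complex \<Rightarrow> complex \<Rightarrow> 2 \<Rightarrow> complex" where
  "v2 a b i = (if i = 0 then a else b)"
definition v3 :: "complex \<Rightarrow> complex \<Rightarrow> complex \<Rightarrow> 3 \<Rightarrow> complex" where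
  "v3 a b c i = (if i = 0 then a else if i = 1 then b else c)"
definition repO :: "('n \<Rightarrow> complex) \<Rightarrow> ('n \<Rightarrow> complex) \<Rightarrow> ('n \<Rightarrow> complex) \<Rightarrow> ('n \<Rightarrow> complex) \<Rightarrow> m2 \<Rightarrow> m2 \<Rightarrow> 'n \<times> 'n \<Rightarrow> m2" where
  "repO p q r s A D = (\<lambda>(i,j). sc (p i * q j) * A + sc (r i * s j) * D)"
definition repB :: "('n \<Rightarrow> complex) \<Rightarrow> ('n \<Rightarrow> complex) \<Rightarrow> ('n \<Rightarrow> complex) \<Rightarrow> ('n \<Rightarrow> complex) \<Rightarrow> m2 \<Rightarrow> m2 \<Rightarrow> 'n \<times> 'n \<Rightarrow> m2" where
  "repB v y w z A D = (\<lambda>(i,j). sc (1/3) + sc (v i * y j) * A + sc (w i * z j) * D)"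

lemmas mdefs = mX_def mZ_def mU_def mL_def v2_def v3_def sc_def one_m2_def zero_m2_def

lemma "goodO (repO (v2 (3/5) (4/5)) (v2 1 0) (v2 (-4/5) (3/5)) (v2 0 1) mX mZ)"
  by (simp add: goodO_iff forall2 sum2 repO_def mdefs)

lemma "goodB (repB (v3 0 1 (-1)) (v3 0 (1/2) (-1/2)) (v3 (-2) 1 1) (v3 (-1/3) (1/6) (1/6)) mX mU)"
  by (simp add: goodB_iff forall3 sum3 repB_def mdefs)

lemma abs_O_sum: "(\<Sum>k\<in>I. abs_pol_O (f k)) = abs_pol_O (\<Sum>k\<in>I. f k)"
  by (induction I rule: infinite_finite_induct) (simp_all add: zero_pol_O.abs_eq plus_pol_O.abs_eq)
lemma abs_B_sum: "(\<Sum>k\<in>I. abs_pol_B (f k)) = abs_pol_B (\<Sum>k\<in>I. f k)"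
  by (induction I rule: infinite_finite_induct) (simp_all add: zero_pol_B.abs_eq plus_pol_B.abs_eq)

lemma O_rel_eq: "abs_pol_O p = abs_pol_O q" if "p - q \<in> O_rels"
  using that by (simp add: pol_O.abs_eq_iff O_equiv_def ideal_gen.base)
lemma B_rel_eq: "abs_pol_B p = abs_pol_B q" if "p - q \<in> B_rels"
  using that by (simp add: pol_B.abs_eq_iff B_equiv_def ideal_gen.base)

lemma O_row: "(\<Sum>k\<in>UNIV. o_gen i k * o_gen j k) = (if i = j then 1 else 0)"
proof -
  have "(\<Sum>k\<in>UNIV. o_gen i k * o_gen j k) = abs_pol_O (\<Sum>k\<in>UNIV. gen (i,k) * gen (j,k))"
    by (simp add: o_gen.abs_eq times_pol_O.abs_eq abs_O_sum)
  also have "\<dots> = abs_pol_O (if i = j then 1 else 0)"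
    by (rule O_rel_eq) (auto simp: O_rels_def)
  finally show ?thesis by (simp add: one_pol_O.abs_eq zero_pol_O.abs_eq)
qed

lemma O_col: "(\<Sum>k\<in>UNIV. o_gen k i * o_gen k j) = (if i = j then 1 else 0)"
proof -
  have "(\<Sum>k\<in>UNIV. o_gen k i * o_gen k j) = abs_pol_O (\<Sum>k\<in>UNIV. gen (k,i) * gen (k,j))"
    by (simp add: o_gen.abs_eq times_pol_O.abs_eq abs_O_sum)
  also have "\<dots> = abs_pol_O (if i = j then 1 else 0)"
    by (rule O_rel_eq) (auto simp: O_rels_def)
  finally show ?thesis by (simp add: one_pol_O.abs_eq zero_pol_O.abs_eq)
qed

lemma B_row: "(\<Sum>k\<in>UNIV. b_gen i k * b_gen j k) = (if i = j then 1 else 0)"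
proof -
  have "(\<Sum>k\<in>UNIV. b_gen i k * b_gen j k) = abs_pol_B (\<Sum>k\<in>UNIV. gen (i,k) * gen (j,k))"
    by (simp add: b_gen.abs_eq times_pol_B.abs_eq abs_B_sum)
  also have "\<dots> = abs_pol_B (if i = j then 1 else 0)"
    by (rule B_rel_eq) (auto simp: B_rels_def O_rels_def)
  finally show ?thesis by (simp add: one_pol_B.abs_eq zero_pol_B.abs_eq)
qed

lemma B_col: "(\<Sum>k\<in>UNIV. b_gen k i * b_gen k j) = (if i = j then 1 else 0)"
proof -
  have "(\<Sum>k\<in>UNIV. b_gen k i * b_gen k j) = abs_pol_B (\<Sum>k\<in>UNIV. gen (k,i) * gen (k,j))"
    by (simp add: b_gen.abs_eq times_pol_B.abs_eq abs_B_sum)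
  also have "\<dots> = abs_pol_B (if i = j then 1 else 0)"
    by (rule B_rel_eq) (auto simp: B_rels_def O_rels_def)
  finally show ?thesis by (simp add: one_pol_B.abs_eq zero_pol_B.abs_eq)
qed

lemma B_rowsum: "(\<Sum>k\<in>UNIV. b_gen i k) = 1"
proof -
  have "(\<Sum>k\<in>UNIV. b_gen i k) = abs_pol_B (\<Sum>k\<in>UNIV. gen (i,k))"
    by (simp add: b_gen.abs_eq abs_B_sum)
  also have "\<dots> = abs_pol_B 1"
    by (rule B_rel_eq) (auto simp: B_rels_def)
  finally show ?thesis by (simp add: one_pol_B.abs_eq)
qed

lemma B_colsum: "(\<Sum>k\<in>UNIV. b_gen k i) = 1"
proof -
  have "(\<Sum>k\<in>UNIV. b_gen k i) = abs_pol_B (\<Sum>k\<in>UNIV. gen (k,i))"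
    by (simp add: b_gen.abs_eq abs_B_sum)
  also have "\<dots> = abs_pol_B 1"
    by (rule B_rel_eq) (auto simp: B_rels_def)
  finally show ?thesis by (simp add: one_pol_B.abs_eq)
qed

lemma single0_comm: "Poly_Mapping.single 0 c * p = p * Poly_Mapping.single 0 (c::complex)"
proof -
  have "Poly_Mapping.single 0 c * p = (\<Sum>w\<in>Poly_Mapping.keys p. Poly_Mapping.single 0 c * Poly_Mapping.single w (Poly_Mapping.lookup p w))"
    by (subst poly_expand[of p]) (simp add: sum_distrib_left)
  also have "\<dots> = (\<Sum>w\<in>Poly_Mapping.keys p. Poly_Mapping.single w (Poly_Mapping.lookup p w) * Poly_Mapping.single 0 c)"
    by (simp add: mult_single mult.commute)
  also have "\<dots> = p * Poly_Mapping.single 0 c"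
    by (subst (2) poly_expand[of p]) (simp add: sum_distrib_right)
  finally show ?thesis .
qed

lemma scaleO_mult_left: "scale_O c x * y = scale_O c (x * y)"
  by transfer (simp add: fscale_def mult.assoc O_equiv_eqI)
lemma fscale_right: "x * fscale c y = fscale c (x * y)"
proof -
  have "x * (Poly_Mapping.single 0 c * y) = (x * Poly_Mapping.single 0 c) * y" by (simp add: mult.assoc)
  also have "\<dots> = Poly_Mapping.single 0 c * (x * y)" by (simp add: single0_comm mult.assoc)
  finally show ?thesis by (simp add: fscale_def)
qed
lemma scaleO_mult_right: "x * scale_O c y = scale_O c (x * y)"
  by transfer (simp add: fscale_right O_equiv_eqI)
lemma scaleB_mult_left: "scale_B c x * y = scale_B c (x * y)"
  by transfer (simp add: fscale_def mult.assoc B_equiv_eqI)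
lemma scaleB_mult_right: "x * scale_B c y = scale_B c (x * y)"
  by transfer (simp add: fscale_right B_equiv_eqI)

lemma sum10: "(\<Sum>i<(10::nat). f i) = f 0 + f 1 + f 2 + f 3 + f 4 + f 5 + f 6 + f 7 + f 8 + (f 9 :: 'a::comm_monoid_add)"
  by (simp add: eval_nat_numeral ac_simps)

lemma sum14: "(\<Sum>i<(14::nat). f i) = f 0 + f 1 + f 2 + f 3 + f 4 + f 5 + f 6 + f 7 + f 8 + f 9 + f 10 + f 11 + f 12 + (f 13 :: 'a::comm_monoid_add)"
  by (simp add: eval_nat_numeral ac_simps)

lemma (in vector_space) indep_family:
  assumes H: "\<And>c. (\<Sum>i<n. scale (c i) (f i)) = 0 \<Longrightarrow> \<forall>i<n. c i = 0"
  shows "dim (span (f ` {..<n})) = n"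
proof -
  have inj: "inj_on f {..<n}"
  proof (rule inj_onI, rule ccontr)
    fix i j assume ij: "i \<in> {..<n}" "j \<in> {..<n}" "f i = f j" "i \<noteq> j"
    define c where "c k = (if k = i then 1 else if k = j then -1 else (0::'a))" for k
    have "(\<Sum>k<n. scale (c k) (f k)) = (\<Sum>k\<in>{i,j}. scale (c k) (f k))"
      by (rule sum.mono_neutral_right) (use ij in \<open>auto simp: c_def\<close>)
    also have "\<dots> = 0" using ij by (simp add: c_def)
    finally have "\<forall>k<n. c k = 0" by (rule H)
    thus False using ij by (auto simp: c_def)
  qed
  have ind: "independent (f ` {..<n})"
  proof
    assume "dependent (f ` {..<n})"
    then obtain c v where v: "v \<in> f ` {..<n}" "c v \<noteq> 0" and s: "(\<Sum>v\<in>f ` {..<n}. scale (c v) v) = 0"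
      by (auto simp: dependent_finite)
    have "(\<Sum>i<n. scale (c (f i)) (f i)) = 0" using s by (simp add: sum.reindex[OF inj])
    hence "\<forall>i<n. c (f i) = 0" by (rule H)
    thus False using v by auto
  qed
  show ?thesis using dim_span_eq_card_independent[OF ind] card_image[OF inj] by simp
qed

definition PO :: "nat \<Rightarrow> (2 \<times> 2) fpoly" where
  "PO i = [gen (0,0) * gen (0,0), gen (0,1) * gen (0,1), gen (0,0) * gen (0,1), gen (0,0) * gen (1,0),
           gen (0,0) * gen (1,1), gen (0,1) * gen (0,0), gen (0,1) * gen (1,0), gen (1,0) * gen (0,0),
           gen (1,0) * gen (0,1), gen (1,1) * gen (0,0)] ! i"

definition tO :: "nat \<Rightarrow> 2 pol_O" where "tO i = abs_pol_O (PO i)"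

declare phi_mult[simp]

lemma O_indep:
  assumes H: "(\<Sum>i<(10::nat). scale_O (c i) (tO i)) = 0"
  shows "\<forall>i<10. c i = 0"
proof -
  note H' = H[unfolded tO_def]
  define g1 where "g1 = (repO (v2 1 0) (v2 1 0) (v2 0 1) (v2 0 1) mX mX :: 2 \<times> 2 \<Rightarrow> m2)"
  have "goodO g1" by (simp add: g1_def goodO_iff forall2 sum2 repO_def mdefs)
  from O_lin[OF H' this] have E1: "(\<Sum>i<(10::nat). sc (c i) * phi g1 (PO i)) = 0" .
  note E1 = E1[unfolded g1_def sum10 PO_def repO_def mdefs, simplified, unfolded One_nat_def[symmetric]]
  define g2 where "g2 = (repO (v2 1 0) (v2 1 0) (v2 0 1) (v2 0 1) mX mZ :: 2 \<times> 2 \<Rightarrow> m2)"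
  have "goodO g2" by (simp add: g2_def goodO_iff forall2 sum2 repO_def mdefs)
  from O_lin[OF H' this] have E2: "(\<Sum>i<(10::nat). sc (c i) * phi g2 (PO i)) = 0" .
  note E2 = E2[unfolded g2_def sum10 PO_def repO_def mdefs, simplified, unfolded One_nat_def[symmetric]]
  define g3 where "g3 = (repO (v2 1 0) (v2 0 1) (v2 0 1) (v2 1 0) mX mX :: 2 \<times> 2 \<Rightarrow> m2)"
  have "goodO g3" by (simp add: g3_def goodO_iff forall2 sum2 repO_def mdefs)
  from O_lin[OF H' this] have E3: "(\<Sum>i<(10::nat). sc (c i) * phi g3 (PO i)) = 0" .
  note E3 = E3[unfolded g3_def sum10 PO_def repO_def mdefs, simplified, unfolded One_nat_def[symmetric]]
  define g4 where "g4 = (repO (v2 1 0) (v2 0 1) (v2 0 1) (v2 1 0) mX mZ :: 2 \<times> 2 \<Rightarrow> m2)"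
  have "goodO g4" by (simp add: g4_def goodO_iff forall2 sum2 repO_def mdefs)
  from O_lin[OF H' this] have E4: "(\<Sum>i<(10::nat). sc (c i) * phi g4 (PO i)) = 0" .
  note E4 = E4[unfolded g4_def sum10 PO_def repO_def mdefs, simplified, unfolded One_nat_def[symmetric]]
  define g5 where "g5 = (repO (v2 1 0) (v2 (3/5) (4/5)) (v2 0 1) (v2 (-4/5) (3/5)) mX mX :: 2 \<times> 2 \<Rightarrow> m2)"
  have "goodO g5" by (simp add: g5_def goodO_iff forall2 sum2 repO_def mdefs)
  from O_lin[OF H' this] have E5: "(\<Sum>i<(10::nat). sc (c i) * phi g5 (PO i)) = 0" .
  note E5 = E5[unfolded g5_def sum10 PO_def repO_def mdefs, simplified, unfolded One_nat_def[symmetric]]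
  define g6 where "g6 = (repO (v2 1 0) (v2 (3/5) (4/5)) (v2 0 1) (v2 (-4/5) (3/5)) mX mZ :: 2 \<times> 2 \<Rightarrow> m2)"
  have "goodO g6" by (simp add: g6_def goodO_iff forall2 sum2 repO_def mdefs)
  from O_lin[OF H' this] have E6: "(\<Sum>i<(10::nat). sc (c i) * phi g6 (PO i)) = 0" .
  note E6 = E6[unfolded g6_def sum10 PO_def repO_def mdefs, simplified, unfolded One_nat_def[symmetric]]
  define g7 where "g7 = (repO (v2 (3/5) (4/5)) (v2 1 0) (v2 (-4/5) (3/5)) (v2 0 1) mX mZ :: 2 \<times> 2 \<Rightarrow> m2)"
  have "goodO g7" by (simp add: g7_def goodO_iff forall2 sum2 repO_def mdefs)
  from O_lin[OF H' this] have E7: "(\<Sum>i<(10::nat). sc (c i) * phi g7 (PO i)) = 0" .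
  note E7 = E7[unfolded g7_def sum10 PO_def repO_def mdefs, simplified, unfolded One_nat_def[symmetric]]
  have L0: "1 * c 0 + 1 * c 4 + 1 * c 9 = 0" using E1 by ((elim conjE)?, algebra)
  have L1: "1 * c 0 = 0" using E2 by ((elim conjE)?, algebra)
  have L2: "(-1) * c 4 + 1 * c 9 = 0" using E2 by ((elim conjE)?, algebra)
  have L3: "1 * c 1 + 1 * c 6 + 1 * c 8 = 0" using E3 by ((elim conjE)?, algebra)
  have L4: "1 * c 1 = 0" using E4 by ((elim conjE)?, algebra)
  have L5: "(-1) * c 6 + 1 * c 8 = 0" using E4 by ((elim conjE)?, algebra)
  have L6: "9 * c 0 + 16 * c 1 + 12 * c 2 + (-12) * c 3 + 9 * c 4 + 12 * c 5 + (-16) * c 6 + (-12) * c 7 + (-16) * c 8 + 9 * c 9 = 0" using E5 by ((elim conjE)?, algebra)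
  have L7: "9 * c 0 + 16 * c 1 + 12 * c 2 + 12 * c 5 = 0" using E6 by ((elim conjE)?, algebra)
  have L8: "12 * c 3 + (-9) * c 4 + 16 * c 6 + (-12) * c 7 + (-16) * c 8 + 9 * c 9 = 0" using E6 by ((elim conjE)?, algebra)
  have L9: "12 * c 2 + (-9) * c 4 + (-12) * c 5 + (-16) * c 6 + 16 * c 8 + 9 * c 9 = 0" using E7 by ((elim conjE)?, algebra)
  have C0: "c 0 = 0" using L0 L1 L2 L3 L4 L5 L6 L7 L8 L9 by algebra
  have C1: "c 1 = 0" using L0 L1 L2 L3 L4 L5 L6 L7 L8 L9 by algebra
  have C2: "c 2 = 0" using L0 L1 L2 L3 L4 L5 L6 L7 L8 L9 by algebra
  have C3: "c 3 = 0" using L0 L1 L2 L3 L4 L5 L6 L7 L8 L9 by algebra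
  have C4: "c 4 = 0" using L0 L1 L2 L3 L4 L5 L6 L7 L8 L9 by algebra
  have C5: "c 5 = 0" using L0 L1 L2 L3 L4 L5 L6 L7 L8 L9 by algebra
  have C6: "c 6 = 0" using L0 L1 L2 L3 L4 L5 L6 L7 L8 L9 by algebra
  have C7: "c 7 = 0" using L0 L1 L2 L3 L4 L5 L6 L7 L8 L9 by algebra
  have C8: "c 8 = 0" using L0 L1 L2 L3 L4 L5 L6 L7 L8 L9 by algebra
  have C9: "c 9 = 0" using L0 L1 L2 L3 L4 L5 L6 L7 L8 L9 by algebra
  show ?thesis
  proof (intro allI impI)
    fix i :: nat assume "i < 10"
    hence "i = 0 \<or> i = 1 \<or> i = 2 \<or> i = 3 \<or> i = 4 \<or> i = 5 \<or> i = 6 \<or> i = 7 \<or> i = 8 \<or> i = 9" by arith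
    thus "c i = 0" using C0 C1 C2 C3 C4 C5 C6 C7 C8 C9 by auto
  qed
qed

interpretation VO: vector_space "scale_O :: complex \<Rightarrow> 2 pol_O \<Rightarrow> 2 pol_O"
  by (rule scale_O_vector_space)

lemma tO_img: "tO ` {..<10} = {o_gen 0 0 * o_gen 0 0, o_gen 0 1 * o_gen 0 1, o_gen 0 0 * o_gen 0 1,
   o_gen 0 0 * o_gen 1 0, o_gen 0 0 * o_gen 1 1, o_gen 0 1 * o_gen 0 0, o_gen 0 1 * o_gen 1 0,
   o_gen 1 0 * o_gen 0 0, o_gen 1 0 * o_gen 0 1, o_gen 1 1 * o_gen 0 0}"
  by (simp add: tO_def PO_def eval_nat_numeral lessThan_Suc o_gen.abs_eq times_pol_O.abs_eq insert_commute)

lemma O_span: "VO.span {o_gen m n * o_gen s t | m n s t. True} = VO.span (tO ` {..<10})"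
proof -
  let ?a = "o_gen 0 0 :: 2 pol_O" and ?b = "o_gen 0 1 :: 2 pol_O"
    and ?c = "o_gen 1 0 :: 2 pol_O" and ?d = "o_gen 1 1 :: 2 pol_O"
  have r00: "?a * ?a + ?b * ?b = 1" using O_row[of "0::2" 0] by (simp add: sum2)
  have c00: "?a * ?a + ?c * ?c = 1" using O_col[of "0::2" 0] by (simp add: sum2)
  have c11: "?b * ?b + ?d * ?d = 1" using O_col[of "1::2" 1] by (simp add: sum2)
  have r01: "?a * ?c + ?b * ?d = 0" using O_row[of "0::2" 1] by (simp add: sum2)
  have r10: "?c * ?a + ?d * ?b = 0" using O_row[of "1::2" 0] by (simp add: sum2)
  have c01: "?a * ?b + ?c * ?d = 0" using O_col[of "0::2" 1] by (simp add: sum2)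
  have c10: "?b * ?a + ?d * ?c = 0" using O_col[of "1::2" 0] by (simp add: sum2)
  have dd: "?d * ?d = ?a * ?a" using r00 c11 by (metis add.commute add_left_cancel)
  have cc: "?c * ?c = ?b * ?b" using r00 c00 by (metis add_left_cancel)
  have bd: "?b * ?d = - (?a * ?c)" using r01 by (simp add: eq_neg_iff_add_eq_0 add.commute)
  have db: "?d * ?b = - (?c * ?a)" using r10 by (simp add: eq_neg_iff_add_eq_0 add.commute)
  have cd: "?c * ?d = - (?a * ?b)" using c01 by (simp add: eq_neg_iff_add_eq_0 add.commute)
  have dc: "?d * ?c = - (?b * ?a)" using c10 by (simp add: eq_neg_iff_add_eq_0 add.commute)
  show ?thesis
  proof (rule VO.span_eq[THEN iffD2], rule conjI)
    show "{o_gen m n * o_gen s t | m n s t. True} \<subseteq> VO.span (tO ` {..<10})"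
    proof
      fix x :: "2 pol_O" assume "x \<in> {o_gen m n * o_gen s t | m n s t. True}"
      then obtain m n s t where x: "x = o_gen m n * o_gen s t" by blast
      have m: "m = 0 \<or> m = 1" and n: "n = 0 \<or> n = 1" and s: "s = 0 \<or> s = 1" and t: "t = 0 \<or> t = 1"
        using exhaust2 by auto
      show "x \<in> VO.span (tO ` {..<10})"
        unfolding tO_img x
        using m n s t
        by (elim disjE) (simp_all add: dd cc bd db cd dc VO.span_base VO.span_neg)
    qed
    show "tO ` {..<10} \<subseteq> VO.span {o_gen m n * o_gen s t | m n s t. True}"
      unfolding tO_img by (intro subsetI VO.span_base) blast
  qed
qed

lemma O_dim: "vector_space.dim (scale_O :: complex \<Rightarrow> 2 pol_O \<Rightarrow> 2 pol_O)
           (module.span scale_O {o_gen m n * o_gen s t | m n s t. True}) = 10"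
  unfolding O_span by (rule VO.indep_family) (rule O_indep)

definition PB :: "nat \<Rightarrow> (3 \<times> 3) fpoly" where
  "PB i = [1, gen (0,0), gen (0,1), gen (1,0), gen (1,1), gen (0,0) * gen (1,1), gen (0,1) * gen (1,0),
           gen (0,1) * gen (1,1), gen (1,0) * gen (0,1), gen (1,0) * gen (1,1), gen (1,1) * gen (0,0),
           gen (1,1) * gen (0,1), gen (1,1) * gen (1,0), gen (1,1) * gen (1,1)] ! i"

definition tB :: "nat \<Rightarrow> 3 pol_B" where "tB i = abs_pol_B (PB i)"

lemma B_indep:
  assumes H: "(\<Sum>i<(14::nat). scale_B (c i) (tB i)) = 0"
  shows "\<forall>i<14. c i = 0"
proof -
  note H' = H[unfolded tB_def]
  define g1 where "g1 = (repB (v3 0 1 (-1)) (v3 0 (1/2) (-1/2)) (v3 (-2) 1 1) (v3 (-1/3) (1/6) (1/6)) mX mU :: 3 \<times> 3 \<Rightarrow> m2)"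
  have "goodB g1" by (simp add: g1_def goodB_iff forall3 sum3 repB_def mdefs)
  from B_lin[OF H' this] have E1: "(\<Sum>i<(14::nat). sc (c i) * phi g1 (PB i)) = 0" .
  note E1 = E1[unfolded g1_def sum14 PB_def repB_def mdefs, simplified, unfolded One_nat_def[symmetric]]
  define g2 where "g2 = (repB (v3 0 1 (-1)) (v3 0 (-1/2) (1/2)) (v3 (-2) 1 1) (v3 (-1/3) (1/6) (1/6)) mU mU :: 3 \<times> 3 \<Rightarrow> m2)"
  have "goodB g2" by (simp add: g2_def goodB_iff forall3 sum3 repB_def mdefs)
  from B_lin[OF H' this] have E2: "(\<Sum>i<(14::nat). sc (c i) * phi g2 (PB i)) = 0" .
  note E2 = E2[unfolded g2_def sum14 PB_def repB_def mdefs, simplified, unfolded One_nat_def[symmetric]]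
  define g3 where "g3 = (repB (v3 1 (-1) 0) (v3 (-1/2) 0 (1/2)) (v3 (-1) (-1) 2) (v3 (-1/6) (1/3) (-1/6)) mZ mL :: 3 \<times> 3 \<Rightarrow> m2)"
  have "goodB g3" by (simp add: g3_def goodB_iff forall3 sum3 repB_def mdefs)
  from B_lin[OF H' this] have E3: "(\<Sum>i<(14::nat). sc (c i) * phi g3 (PB i)) = 0" .
  note E3 = E3[unfolded g3_def sum14 PB_def repB_def mdefs, simplified, unfolded One_nat_def[symmetric]]
  define g4 where "g4 = (repB (v3 (-1) 1 0) (v3 0 (-1/2) (1/2)) (v3 (-1) (-1) 2) (v3 (-1/3) (1/6) (1/6)) mX mU :: 3 \<times> 3 \<Rightarrow> m2)"
  have "goodB g4" by (simp add: g4_def goodB_iff forall3 sum3 repB_def mdefs)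
  from B_lin[OF H' this] have E4: "(\<Sum>i<(14::nat). sc (c i) * phi g4 (PB i)) = 0" .
  note E4 = E4[unfolded g4_def sum14 PB_def repB_def mdefs, simplified, unfolded One_nat_def[symmetric]]
  define g5 where "g5 = (repB (v3 0 (-1) 1) (v3 (1/2) (-1/2) 0) (v3 2 (-1) (-1)) (v3 (-1/6) (-1/6) (1/3)) mZ mZ :: 3 \<times> 3 \<Rightarrow> m2)"
  have "goodB g5" by (simp add: g5_def goodB_iff forall3 sum3 repB_def mdefs)
  from B_lin[OF H' this] have E5: "(\<Sum>i<(14::nat). sc (c i) * phi g5 (PB i)) = 0" .
  note E5 = E5[unfolded g5_def sum14 PB_def repB_def mdefs, simplified, unfolded One_nat_def[symmetric]]
  define g6 where "g6 = (repB (v3 1 0 (-1)) (v3 0 (1/2) (-1/2)) (v3 (-1) 2 (-1)) (v3 (-1/3) (1/6) (1/6)) mU mL :: 3 \<times> 3 \<Rightarrow> m2)"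
  have "goodB g6" by (simp add: g6_def goodB_iff forall3 sum3 repB_def mdefs)
  from B_lin[OF H' this] have E6: "(\<Sum>i<(14::nat). sc (c i) * phi g6 (PB i)) = 0" .
  note E6 = E6[unfolded g6_def sum14 PB_def repB_def mdefs, simplified, unfolded One_nat_def[symmetric]]
  have L0: "12 * c 0 + 12 * c 1 + 6 * c 4 + 10 * c 5 + (-2) * c 7 + (-2) * c 9 + 6 * c 10 + 7 * c 13 = 0" using E1 by ((elim conjE)?, algebra)
  have L1: "12 * c 1 + (-6) * c 2 + (-6) * c 3 + 12 * c 4 + 14 * c 5 + (-4) * c 6 + (-1) * c 7 + (-4) * c 8 + (-1) * c 9 + 2 * c 10 + 5 * c 11 + 5 * c 12 + 8 * c 13 = 0" using E1 by ((elim conjE)?, algebra)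
  have L2: "3 * c 4 + (-1) * c 5 + 2 * c 7 + 2 * c 9 + 3 * c 10 + 2 * c 13 = 0" using E1 by ((elim conjE)?, algebra)
  have L3: "36 * c 0 + (-12) * c 1 + 24 * c 2 + 24 * c 3 + 6 * c 4 + (-2) * c 5 + 16 * c 6 + 4 * c 7 + 16 * c 8 + 4 * c 9 + 10 * c 10 + (-2) * c 11 + (-2) * c 12 + 13 * c 13 = 0" using E1 by ((elim conjE)?, algebra)
  have L4: "1 * c 0 + 1 * c 1 = 0" using E2 by ((elim conjE)?, algebra)
  have L5: "1 * c 0 + 1 * c 3 = 0" using E3 by ((elim conjE)?, algebra)
  have L6: "3 * c 1 + (-6) * c 2 + 3 * c 3 + (-6) * c 4 + (-4) * c 5 + (-4) * c 6 + (-4) * c 7 + 2 * c 8 + 2 * c 9 + 2 * c 10 + (-4) * c 11 + (-4) * c 12 + (-4) * c 13 = 0" using E3 by ((elim conjE)?, algebra)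
  have L7: "9 * c 0 + 6 * c 1 + 6 * c 2 + (-3) * c 3 + 6 * c 4 + 4 * c 5 + (-2) * c 6 + 4 * c 7 + (-2) * c 8 + (-2) * c 9 + 4 * c 10 + 4 * c 11 + (-2) * c 12 + 4 * c 13 = 0" using E3 by ((elim conjE)?, algebra)
  have L8: "36 * c 0 + 24 * c 1 + 6 * c 2 + 24 * c 3 + 6 * c 4 + (-2) * c 5 + 4 * c 6 + (-5) * c 7 + 10 * c 8 + (-2) * c 9 + 4 * c 10 + (-11) * c 11 + 4 * c 12 + 13 * c 13 = 0" using E4 by ((elim conjE)?, algebra)
  have L9: "6 * c 1 + 6 * c 2 + 6 * c 3 + (-12) * c 4 + (-5) * c 5 + 1 * c 6 + 1 * c 7 + 7 * c 8 + (-5) * c 9 + 1 * c 10 + (-5) * c 11 + 1 * c 12 + (-8) * c 13 = 0" using E4 by ((elim conjE)?, algebra)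
  have L10: "3 * c 2 + (-3) * c 4 + 2 * c 6 + (-1) * c 7 + (-2) * c 10 + 1 * c 11 + (-2) * c 12 + (-2) * c 13 = 0" using E4 by ((elim conjE)?, algebra)
  have L11: "1 * c 0 + 1 * c 4 + 1 * c 13 = 0" using E5 by ((elim conjE)?, algebra)
  have L12: "18 * c 0 + 12 * c 1 + 12 * c 2 + (-6) * c 3 + 12 * c 4 + 8 * c 5 + (-10) * c 6 + 11 * c 7 + (-4) * c 8 + (-4) * c 9 + 8 * c 10 + 8 * c 11 + (-4) * c 12 + 8 * c 13 = 0" using E6 by ((elim conjE)?, algebra)
  have L13: "3 * c 2 + 3 * c 6 + (-1) * c 8 + 2 * c 11 = 0" using E6 by ((elim conjE)?, algebra)
  have C0: "c 0 = 0" using L0 L1 L2 L3 L4 L5 L6 L7 L8 L9 L10 L11 L12 L13 by algebra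
  have C1: "c 1 = 0" using L0 L1 L2 L3 L4 L5 L6 L7 L8 L9 L10 L11 L12 L13 by algebra
  have C2: "c 2 = 0" using L0 L1 L2 L3 L4 L5 L6 L7 L8 L9 L10 L11 L12 L13 by algebra
  have C3: "c 3 = 0" using L0 L1 L2 L3 L4 L5 L6 L7 L8 L9 L10 L11 L12 L13 by algebra
  have C4: "c 4 = 0" using L0 L1 L2 L3 L4 L5 L6 L7 L8 L9 L10 L11 L12 L13 by algebra
  have C5: "c 5 = 0" using L0 L1 L2 L3 L4 L5 L6 L7 L8 L9 L10 L11 L12 L13 by algebra
  have C6: "c 6 = 0" using L0 L1 L2 L3 L4 L5 L6 L7 L8 L9 L10 L11 L12 L13 by algebra
  have C7: "c 7 = 0" using L0 L1 L2 L3 L4 L5 L6 L7 L8 L9 L10 L11 L12 L13 by algebra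
  have C8: "c 8 = 0" using L0 L1 L2 L3 L4 L5 L6 L7 L8 L9 L10 L11 L12 L13 by algebra
  have C9: "c 9 = 0" using L0 L1 L2 L3 L4 L5 L6 L7 L8 L9 L10 L11 L12 L13 by algebra
  have C10: "c 10 = 0" using L0 L1 L2 L3 L4 L5 L6 L7 L8 L9 L10 L11 L12 L13 by algebra
  have C11: "c 11 = 0" using L0 L1 L2 L3 L4 L5 L6 L7 L8 L9 L10 L11 L12 L13 by algebra
  have C12: "c 12 = 0" using L0 L1 L2 L3 L4 L5 L6 L7 L8 L9 L10 L11 L12 L13 by algebra
  have C13: "c 13 = 0" using L0 L1 L2 L3 L4 L5 L6 L7 L8 L9 L10 L11 L12 L13 by algebra
  show ?thesis
  proof (intro allI impI)
    fix i :: nat assume "i < 14"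
    hence "i = 0 \<or> i = 1 \<or> i = 2 \<or> i = 3 \<or> i = 4 \<or> i = 5 \<or> i = 6 \<or> i = 7 \<or> i = 8 \<or> i = 9 \<or> i = 10 \<or> i = 11 \<or> i = 12 \<or> i = 13" by arith
    thus "c i = 0" using C0 C1 C2 C3 C4 C5 C6 C7 C8 C9 C10 C11 C12 C13 by auto
  qed
qed

interpretation VB: vector_space "scale_B :: complex \<Rightarrow> 3 pol_B \<Rightarrow> 3 pol_B"
  by (rule scale_B_vector_space)

lemma span_mult_B:
  fixes A A' T :: "3 pol_B set"
  assumes p: "p \<in> VB.span A" and q: "q \<in> VB.span A'" and AB: "\<And>a b. a \<in> A \<Longrightarrow> b \<in> A' \<Longrightarrow> a * b \<in> VB.span T"
  shows "p * q \<in> VB.span T"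
proof -
  have left: "p' * b \<in> VB.span T" if "p' \<in> VB.span A" "b \<in> A'" for p' b
    using that(1)
  proof (induction rule: VB.span_induct)
    case step show ?case using AB[OF _ that(2)] step by simp
  next
    case base
    show ?case unfolding VB.subspace_def
      by (simp add: VB.span_zero VB.span_add distrib_right scaleB_mult_left VB.span_scale)
  qed
  show ?thesis using q
  proof (induction rule: VB.span_induct)
    case step show ?case using left[OF p] step by simp
  next
    case base
    show ?case unfolding VB.subspace_def
      by (simp add: VB.span_zero VB.span_add distrib_left scaleB_mult_right VB.span_scale)
  qed
qed

lemma tB_img: "tB ` {..<14} = {1, b_gen 0 0, b_gen 0 1, b_gen 1 0, b_gen 1 1,
   b_gen 0 0 * b_gen 1 1, b_gen 0 1 * b_gen 1 0, b_gen 0 1 * b_gen 1 1, b_gen 1 0 * b_gen 0 1,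
   b_gen 1 0 * b_gen 1 1, b_gen 1 1 * b_gen 0 0, b_gen 1 1 * b_gen 0 1, b_gen 1 1 * b_gen 1 0,
   b_gen 1 1 * b_gen 1 1}"
  by (simp add: tB_def PB_def eval_nat_numeral lessThan_Suc b_gen.abs_eq times_pol_B.abs_eq
      one_pol_B.abs_eq insert_commute)

lemma half_span: "q + q \<in> VB.span S \<Longrightarrow> q \<in> VB.span S"
proof -
  assume "q + q \<in> VB.span S"
  hence "scale_B (1/2) (q + q) \<in> VB.span S" by (rule VB.span_scale)
  moreover have "scale_B (1/2) (q + q) = q"
    by (simp add: VB.scale_right_distrib flip: VB.scale_left_distrib)
  ultimately show ?thesis by simp
qed

lemma B_span: "VB.span {b_gen m n * b_gen s t | m n s t. True} = VB.span (tB ` {..<14})"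
proof -
  let ?x = "b_gen 0 0 :: 3 pol_B" and ?y = "b_gen 0 1 :: 3 pol_B"
    and ?z = "b_gen 1 0 :: 3 pol_B" and ?w = "b_gen 1 1 :: 3 pol_B"
  let ?V = "VB.span (tB ` {..<14})"
  let ?b02 = "b_gen 0 2 :: 3 pol_B" and ?b12 = "b_gen 1 2 :: 3 pol_B" and ?b20 = "b_gen 2 0 :: 3 pol_B"
    and ?b21 = "b_gen 2 1 :: 3 pol_B" and ?b22 = "b_gen 2 2 :: 3 pol_B"
  have rs0: "?x + ?y + ?b02 = 1" using B_rowsum[of "0::3"] by (simp add: sum3)
  have rs1: "?z + ?w + ?b12 = 1" using B_rowsum[of "1::3"] by (simp add: sum3)
  have cs0: "?x + ?z + ?b20 = 1" using B_colsum[of "0::3"] by (simp add: sum3)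
  have cs1: "?y + ?w + ?b21 = 1" using B_colsum[of "1::3"] by (simp add: sum3)
  have cs2: "?b02 + ?b12 + ?b22 = 1" using B_colsum[of "2::3"] by (simp add: sum3)
  have e02: "?b02 = 1 - ?x - ?y" using rs0 by (simp add: algebra_simps eq_diff_eq)
  have e12: "?b12 = 1 - ?z - ?w" using rs1 by (simp add: algebra_simps eq_diff_eq)
  have e20: "?b20 = 1 - ?x - ?z" using cs0 by (simp add: algebra_simps eq_diff_eq)
  have e21: "?b21 = 1 - ?y - ?w" using cs1 by (simp add: algebra_simps eq_diff_eq)
  have e22: "?b22 = 1 - (1 - ?x - ?y) - (1 - ?z - ?w)" using cs2 e02 e12
    by (simp add: algebra_simps eq_diff_eq)
  have r00: "?x * ?x + ?y * ?y + ?b02 * ?b02 = 1" using B_row[of "0::3" 0] by (simp add: sum3)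
  have r11: "?z * ?z + ?w * ?w + ?b12 * ?b12 = 1" using B_row[of "1::3" 1] by (simp add: sum3)
  have c11: "?y * ?y + ?w * ?w + ?b21 * ?b21 = 1" using B_col[of "1::3" 1] by (simp add: sum3)
  have r01: "?x * ?z + ?y * ?w + ?b02 * ?b12 = 0" using B_row[of "0::3" 1] by (simp add: sum3)
  have c01: "?x * ?y + ?z * ?w + ?b20 * ?b21 = 0" using B_col[of "0::3" 1] by (simp add: sum3)
  have r10: "?z * ?x + ?w * ?y + ?b12 * ?b02 = 0" using B_row[of "1::3" 0] by (simp add: sum3)
  have c10: "?y * ?x + ?w * ?z + ?b21 * ?b20 = 0" using B_col[of "1::3" 0] by (simp add: sum3)
  have q11: "?z * ?z + ?z * ?z = ?z + ?z + ?w + ?w - ?w * ?w - ?w * ?w - ?z * ?w - ?w * ?z"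
  proof -
    have "?z * ?z + ?z * ?z - (?z + ?z + ?w + ?w - ?w * ?w - ?w * ?w - ?z * ?w - ?w * ?z)
        = ?z * ?z + ?w * ?w + (1 - ?z - ?w) * (1 - ?z - ?w) - 1" by (simp add: algebra_simps)
    also have "\<dots> = 0" using r11 e12 by simp
    finally show ?thesis by simp
  qed
  have q11': "?y * ?y + ?y * ?y = ?y + ?y + ?w + ?w - ?w * ?w - ?w * ?w - ?y * ?w - ?w * ?y"
  proof -
    have "?y * ?y + ?y * ?y - (?y + ?y + ?w + ?w - ?w * ?w - ?w * ?w - ?y * ?w - ?w * ?y)
        = ?y * ?y + ?w * ?w + (1 - ?y - ?w) * (1 - ?y - ?w) - 1" by (simp add: algebra_simps)
    also have "\<dots> = 0" using c11 e21 by simp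
    finally show ?thesis by simp
  qed
  have q01: "?x * ?z + ?x * ?z = ?x + ?y + ?z + ?w - 1 - ?y * ?w - ?y * ?w - ?x * ?w - ?y * ?z"
  proof -
    have "?x * ?z + ?x * ?z - (?x + ?y + ?z + ?w - 1 - ?y * ?w - ?y * ?w - ?x * ?w - ?y * ?z)
        = ?x * ?z + ?y * ?w + (1 - ?x - ?y) * (1 - ?z - ?w)" by (simp add: algebra_simps)
    also have "\<dots> = 0" using r01 e02 e12 by simp
    finally show ?thesis by simp
  qed
  have q01': "?x * ?y + ?x * ?y = ?x + ?y + ?z + ?w - 1 - ?z * ?w - ?z * ?w - ?x * ?w - ?z * ?y"
  proof -
    have "?x * ?y + ?x * ?y - (?x + ?y + ?z + ?w - 1 - ?z * ?w - ?z * ?w - ?x * ?w - ?z * ?y)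
        = ?x * ?y + ?z * ?w + (1 - ?x - ?z) * (1 - ?y - ?w)" by (simp add: algebra_simps)
    also have "\<dots> = 0" using c01 e20 e21 by simp
    finally show ?thesis by simp
  qed
  have q10: "?z * ?x + ?z * ?x = ?x + ?y + ?z + ?w - 1 - ?w * ?y - ?w * ?y - ?z * ?y - ?w * ?x"
  proof -
    have "?z * ?x + ?z * ?x - (?x + ?y + ?z + ?w - 1 - ?w * ?y - ?w * ?y - ?z * ?y - ?w * ?x)
        = ?z * ?x + ?w * ?y + (1 - ?z - ?w) * (1 - ?x - ?y)" by (simp add: algebra_simps)
    also have "\<dots> = 0" using r10 e02 e12 by simp
    finally show ?thesis by simp
  qed
  have q10': "?y * ?x + ?y * ?x = ?x + ?y + ?z + ?w - 1 - ?w * ?z - ?w * ?z - ?y * ?z - ?w * ?x"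
  proof -
    have "?y * ?x + ?y * ?x - (?x + ?y + ?z + ?w - 1 - ?w * ?z - ?w * ?z - ?y * ?z - ?w * ?x)
        = ?y * ?x + ?w * ?z + (1 - ?y - ?w) * (1 - ?x - ?z)" by (simp add: algebra_simps)
    also have "\<dots> = 0" using c10 e20 e21 by simp
    finally show ?thesis by simp
  qed
  have q00: "?x * ?x + ?x * ?x = ?x + ?x + ?y + ?y - ?y * ?y - ?y * ?y - ?x * ?y - ?y * ?x"
  proof -
    have "?x * ?x + ?x * ?x - (?x + ?x + ?y + ?y - ?y * ?y - ?y * ?y - ?x * ?y - ?y * ?x)
        = ?x * ?x + ?y * ?y + (1 - ?x - ?y) * (1 - ?x - ?y) - 1" by (simp add: algebra_simps)
    also have "\<dots> = 0" using r00 e02 by simp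
    finally show ?thesis by simp
  qed
  have T: "1 \<in> ?V" "?x \<in> ?V" "?y \<in> ?V" "?z \<in> ?V" "?w \<in> ?V" "?x * ?w \<in> ?V" "?y * ?z \<in> ?V"
     "?y * ?w \<in> ?V" "?z * ?y \<in> ?V" "?z * ?w \<in> ?V" "?w * ?x \<in> ?V" "?w * ?y \<in> ?V"
     "?w * ?z \<in> ?V" "?w * ?w \<in> ?V"
    unfolding tB_img by (auto intro: VB.span_base)
  note cl = T VB.span_add VB.span_diff VB.span_neg
  have m_zz: "?z * ?z \<in> ?V" by (rule half_span) (simp add: q11 cl)
  have m_yy: "?y * ?y \<in> ?V" by (rule half_span) (simp add: q11' cl)
  have m_xz: "?x * ?z \<in> ?V" by (rule half_span) (simp add: q01 cl)
  have m_xy: "?x * ?y \<in> ?V" by (rule half_span) (simp add: q01' cl)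
  have m_zx: "?z * ?x \<in> ?V" by (rule half_span) (simp add: q10 cl)
  have m_yx: "?y * ?x \<in> ?V" by (rule half_span) (simp add: q10' cl)
  have m_xx: "?x * ?x \<in> ?V" by (rule half_span) (simp add: q00 cl m_yy m_xy m_yx)
  let ?L = "{1, ?x, ?y, ?z, ?w}"
  have LL: "a * b \<in> ?V" if "a \<in> ?L" "b \<in> ?L" for a b
    using that by (auto simp: cl m_zz m_yy m_xz m_xy m_zx m_yx m_xx)
  have bL: "b_gen i j \<in> VB.span ?L" for i j :: 3
  proof -
    have sb: "v \<in> ?L \<Longrightarrow> v \<in> VB.span ?L" for v by (rule VB.span_base)
    have i: "i = 0 \<or> i = 1 \<or> i = 2" and j: "j = 0 \<or> j = 1 \<or> j = 2" using exhaust3 by auto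
    show ?thesis using i j
      by (elim disjE) (simp_all add: e02 e12 e20 e21 e22 sb VB.span_diff VB.span_add)
  qed
  show ?thesis
  proof (rule VB.span_eq[THEN iffD2], rule conjI)
    show "{b_gen m n * b_gen s t | m n s t. True} \<subseteq> ?V"
    proof
      fix u :: "3 pol_B" assume "u \<in> {b_gen m n * b_gen s t | m n s t. True}"
      then obtain m n s t where u: "u = b_gen m n * b_gen s t" by blast
      show "u \<in> ?V" unfolding u by (rule span_mult_B[OF bL bL LL])
    qed
    let ?S = "VB.span {b_gen m n * b_gen s t | m n s t. (True::bool)}"
    have inS: "b_gen m n * b_gen s t \<in> ?S" for m n s t :: 3
      by (rule VB.span_base) blast
    have one: "1 \<in> ?S"
    proof -
      have e: "?x * ?x + ?y * ?y + ?b02 * ?b02 = (1::3 pol_B)"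
        using B_row[of "0::3" 0] by (simp add: sum3)
      have "?x * ?x + ?y * ?y + ?b02 * ?b02 \<in> ?S" by (intro VB.span_add inS)
      thus ?thesis unfolding e .
    qed
    have lin: "b_gen i j \<in> ?S" for i j :: 3
    proof -
      have "b_gen i j = b_gen i j * (?x + ?y + ?b02)"
        using B_rowsum[of "0::3"] by (simp add: sum3)
      also have "\<dots> = b_gen i j * ?x + b_gen i j * ?y + b_gen i j * ?b02"
        by (simp add: distrib_left)
      finally have e: "b_gen i j = b_gen i j * ?x + b_gen i j * ?y + b_gen i j * ?b02" .
      have "b_gen i j * ?x + b_gen i j * ?y + b_gen i j * ?b02 \<in> ?S" by (intro VB.span_add inS)
      thus ?thesis using e by simp
    qed
    show "tB ` {..<14} \<subseteq> ?S"
      unfolding tB_img by (intro insert_subsetI empty_subsetI one lin inS)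
  qed
qed

lemma B_dim: "vector_space.dim (scale_B :: complex \<Rightarrow> 3 pol_B \<Rightarrow> 3 pol_B)
           (module.span scale_B {b_gen m n * b_gen s t | m n s t. True}) = 14"
  unfolding B_span by (rule VB.indep_family) (rule B_indep)

theorem lemma7p3:
  shows "vector_space.dim (scale_B :: complex \<Rightarrow> 3 pol_B \<Rightarrow> 3 pol_B)
           (module.span scale_B {b_gen m n * b_gen s t | m n s t. True}) = 14
       \<and> vector_space.dim (scale_O :: complex \<Rightarrow> 2 pol_O \<Rightarrow> 2 pol_O)
           (module.span scale_O {o_gen m n * o_gen s t | m n s t. True}) = 10"
  using B_dim O_dim by simp


end
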